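(* Let $A$ be a finite-dimensional vector space with multiplications $\succ_A,\prec_A:A\otimes A\to A$, and define $x\circ_A y=x\succ_A y+x\prec_A y$ for all $x,y\in A$. Then the following statements are equivalent: (1) $(A,\succ_A,\prec_A)$ is an anti-pre-Leibniz algebra. (2) The identities (AL2), (AL3), (AL4) hold, together with $$(x\circ_A y)\succ_A z=x\prec_A(y\circ_A z)-y\prec_A(x\circ_A z),\quad\forall x,y,z\in A.$$ (3) $(A,\circ_A)$ is a Leibniz algebra and $(-\mathcal L_{\succ_A},-\mathcal R_{\prec_A},A)$ is a representation of $(A,\circ_A)$. (4) $(A,\circ_A)$ is a Leibniz algebra and $(-\mathcal L^*_{\succ_A},\mathcal L^*_{\succ_A}+\mathcal R^*_{\prec_A},A^* )$ is a representation of $(A,\circ_A)$.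
   Context: All vector spaces are finite-dimensional over a field $\mathbb K$ of characteristic zero. For a multiplication $\ast$ on $A$, $\mathcal L_\ast(x)y=x\ast y$ and $\mathcal R_\ast(x)y=y\ast x$. For a linear map $f:A\to\mathrm{End}(V)$, $f^*:A\to\mathrm{End}(V^* )$ is defined by $\langle f^*(x)u^*,v\rangle=-\langle u^*,f(x)v\rangle$. A Leibniz algebra is a vector space $A$ with a multiplication $\circ_A$ satisfying $x\circ_A(y\circ_A z)=(x\circ_A y)\circ_A z+y\circ_A(x\circ_A z)$ for all $x,y,z$. A representation of a Leibniz algebra $(A,\circ_A)$ is a triple $(l,r,V)$ with $V$ a vector space and linear maps $l,r:A\to\mathrm{End}(V)$ such that for all $x,y\in A,v\in V$: $l(x\circ_A y)v=l(x)l(y)v-l(y)l(x)v$; $r(x\circ_A y)v=l(x)r(y)v-r(y)l(x)v$; $r(y)l(x)v=-r(y)r(x)v$. An anti-pre-Leibniz algebra is a vector space $A$ with multiplications $\succ_A,\prec_A$ such that, with $x\circ_A y=x\succ_A y+x\prec_A y$, for all $x,y,z\in A$: (AL1) $(x\circ_A y)\prec_A z=x\succ_A(y\circ_A z)-y\succ_A(x\circ_A z)$; (AL2) $(x\circ_A y)\succ_A z=y\succ_A(x\succ_A z)-x\succ_A(y\succ_A z)$; (AL3) $x\prec_A(y\circ_A z)=(y\succ_A x)\prec_A z-y\succ_A(x\prec_A z)$; (AL4) $(x\succ_A y)\prec_A z=-(y\prec_A x)\prec_A z$. *)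

theory Defs
  imports Complex_Main "HOL-Library.Function_Algebras"
begin

(* A vector space over 'k is modelled as a type 'a::ab_group_add with a scalar
   multiplication scale satisfying the vector_space locale axioms.
   Multiplications are binary operations 'a => 'a => 'a. *)

definition bilinear_op :: "('k::field \<Rightarrow> 'a::ab_group_add \<Rightarrow> 'a) \<Rightarrow> ('a \<Rightarrow> 'a \<Rightarrow> 'a) \<Rightarrow> bool" where
  "bilinear_op scale m \<longleftrightarrow>
     (\<forall>x. Vector_Spaces.linear scale scale (m x)) \<and> (\<forall>y. Vector_Spaces.linear scale scale (\<lambda>x. m x y))"

definition circ_op :: "('a::plus \<Rightarrow> 'a \<Rightarrow> 'a) \<Rightarrow> ('a \<Rightarrow> 'a \<Rightarrow> 'a) \<Rightarrow> 'a \<Rightarrow> 'a \<Rightarrow> 'a" where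
  "circ_op succ prec x y = succ x y + prec x y"

definition leibniz_algebra :: "('a::ab_group_add \<Rightarrow> 'a \<Rightarrow> 'a) \<Rightarrow> bool" where
  "leibniz_algebra m \<longleftrightarrow>
     (\<forall>x y z. m x (m y z) = m (m x y) z + m y (m x z))"

(* Representation (l, r, V) of a Leibniz algebra (A, m): V is the carrier (a subspace
   of the ambient module type 'w with scalar multiplication sV), l and r are linear
   maps A -> End(V), subject to the three identities. *)
definition leibniz_rep ::
  "('k::field \<Rightarrow> 'a::ab_group_add \<Rightarrow> 'a) \<Rightarrow> ('a \<Rightarrow> 'a \<Rightarrow> 'a) \<Rightarrow>
   ('k \<Rightarrow> 'w::ab_group_add \<Rightarrow> 'w) \<Rightarrow> 'w set \<Rightarrow>
   ('a \<Rightarrow> 'w \<Rightarrow> 'w) \<Rightarrow> ('a \<Rightarrow> 'w \<Rightarrow> 'w) \<Rightarrow> bool" where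
  "leibniz_rep sA m sV V l r \<longleftrightarrow>
     (\<forall>x. \<forall>v\<in>V. l x v \<in> V \<and> r x v \<in> V) \<and>
     (\<forall>x. \<forall>v\<in>V. \<forall>w\<in>V. l x (v + w) = l x v + l x w \<and> r x (v + w) = r x v + r x w) \<and>
     (\<forall>x c. \<forall>v\<in>V. l x (sV c v) = sV c (l x v) \<and> r x (sV c v) = sV c (r x v)) \<and>
     (\<forall>x y. \<forall>v\<in>V. l (x + y) v = l x v + l y v \<and> r (x + y) v = r x v + r y v) \<and>
     (\<forall>x c. \<forall>v\<in>V. l (sA c x) v = sV c (l x v) \<and> r (sA c x) v = sV c (r x v)) \<and>
     (\<forall>x y. \<forall>v\<in>V.
        l (m x y) v = l x (l y v) - l y (l x v) \<and>
        r (m x y) v = l x (r y v) - r y (l x v) \<and>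
        r y (l x v) = - r y (r x v))"

definition dual_space :: "('k::field \<Rightarrow> 'a::ab_group_add \<Rightarrow> 'a) \<Rightarrow> ('a \<Rightarrow> 'k) set" where
  "dual_space scale = {u. Vector_Spaces.linear scale ((*)) u}"

definition dual_scale :: "'k::field \<Rightarrow> ('a \<Rightarrow> 'k) \<Rightarrow> ('a \<Rightarrow> 'k)" where
  "dual_scale c u = (\<lambda>v. c * u v)"

definition dual_map :: "('a \<Rightarrow> 'v \<Rightarrow> 'v) \<Rightarrow> 'a \<Rightarrow> ('v \<Rightarrow> 'k::ab_group_add) \<Rightarrow> ('v \<Rightarrow> 'k)" where
  "dual_map f x u = (\<lambda>v. - u (f x v))"

definition left_mult :: "('a \<Rightarrow> 'a \<Rightarrow> 'a) \<Rightarrow> 'a \<Rightarrow> 'a \<Rightarrow> 'a" where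
  "left_mult m x y = m x y"

definition right_mult :: "('a \<Rightarrow> 'a \<Rightarrow> 'a) \<Rightarrow> 'a \<Rightarrow> 'a \<Rightarrow> 'a" where
  "right_mult m x y = m y x"

definition anti_pre_leibniz :: "('a::ab_group_add \<Rightarrow> 'a \<Rightarrow> 'a) \<Rightarrow> ('a \<Rightarrow> 'a \<Rightarrow> 'a) \<Rightarrow> bool" where
  "anti_pre_leibniz succ prec \<longleftrightarrow>
     (\<forall>x y z. prec (circ_op succ prec x y) z
               = succ x (circ_op succ prec y z) - succ y (circ_op succ prec x z)) \<and>
     (\<forall>x y z. succ (circ_op succ prec x y) z = succ y (succ x z) - succ x (succ y z)) \<and>
     (\<forall>x y z. prec x (circ_op succ prec y z) = prec (succ y x) z - succ y (prec x z)) \<and>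
     (\<forall>x y z. prec (succ x y) z = - prec (prec y x) z)"

end

theory Submission
  imports Defs
begin

lemma vs_times: "vector_space ((*) :: 'k::field \<Rightarrow> 'k \<Rightarrow> 'k)"
  by unfold_locales (auto simp: algebra_simps)

lemma lin_facts:
  assumes "Vector_Spaces.linear s1 s2 f"
  shows "f (a + b) = f a + f b" "f (-a) = - f a" "f (a - b) = f a - f b" "f (s1 c a) = s2 c (f a)" "f 0 = 0"
proof -
  interpret l: Vector_Spaces.linear s1 s2 f by fact
  show "f (a + b) = f a + f b" "f (-a) = - f a" "f (a - b) = f a - f b" "f (s1 c a) = s2 c (f a)" "f 0 = 0"
    by (auto simp: l.add l.neg l.diff l.scale l.zero)
qed

lemma iff_diff1: "(L1::'a::ab_group_add) - R1 = L2 - R2 \<Longrightarrow> (L1 = R1) = (L2 = R2)"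
  by (metis eq_iff_diff_eq_0)
lemma iff_diff2: "(L1::'a::ab_group_add) - R1 = R2 - L2 \<Longrightarrow> (L1 = R1) = (L2 = R2)"
  by (metis eq_iff_diff_eq_0 minus_diff_eq neg_equal_0_iff_equal)

lemma g0: "(a::'a::ab_group_add) - b + d = 0 \<Longrightarrow> a = b - d"
proof -
  assume h: "a - b + d = 0"
  have "a = (a - b + d) + (b - d)" by (simp add: algebra_simps)
  then show ?thesis using h by simp
qed

locale apl =
  fixes scale :: "'k::field_char_0 \<Rightarrow> 'a::ab_group_add \<Rightarrow> 'a"
    and s p :: "'a \<Rightarrow> 'a \<Rightarrow> 'a"
  assumes vs: "vector_space scale"
    and bs: "bilinear_op scale s"
    and bp: "bilinear_op scale p"
begin

abbreviation c where "c \<equiv> circ_op s p"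

lemma sR: "Vector_Spaces.linear scale scale (s x)" using bs by (simp add: bilinear_op_def)
lemma sL: "Vector_Spaces.linear scale scale (\<lambda>x. s x y)" using bs by (simp add: bilinear_op_def)
lemma pR: "Vector_Spaces.linear scale scale (p x)" using bp by (simp add: bilinear_op_def)
lemma pL: "Vector_Spaces.linear scale scale (\<lambda>x. p x y)" using bp by (simp add: bilinear_op_def)

lemmas sRf = lin_facts[OF sR] 
lemmas sLf = lin_facts[OF sL, simplified]
lemmas pRf = lin_facts[OF pR]
lemmas pLf = lin_facts[OF pL, simplified]
lemmas bil = sRf pRf sLf pLf

lemma two0:
  fixes a :: 'a
  assumes h: "a + a = 0"
  shows "a = 0"
proof -
  interpret vector_space scale by (rule vs)
  have "scale (1/2) (a + a) = scale (1/2 + 1/2) a" by (simp only: scale_left_distrib scale_right_distrib)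
  also have "\<dots> = a" by simp
  finally show ?thesis using h by simp
qed

lemma sep:
  assumes h: "\<forall>u\<in>dual_space scale. u a = 0"
  shows "a = 0"
proof (rule ccontr)
  assume a: "a \<noteq> 0"
  interpret vector_space_pair scale "(*) :: 'k \<Rightarrow> 'k \<Rightarrow> 'k"
    using vs vs_times by (simp add: vector_space_pair_def)
  have "vs1.independent {a}" using a by simp
  then obtain g where "Vector_Spaces.linear scale (*) g" "\<forall>x\<in>{a}. g x = (\<lambda>_. 1) x"
    using linear_independent_extend[of "{a}" "\<lambda>_. 1"] by blast
  then show False using h by (auto simp: dual_space_def)
qed

definition "AL1 \<longleftrightarrow> (\<forall>x y z. p (c x y) z = s x (c y z) - s y (c x z))"
definition "AL2 \<longleftrightarrow> (\<forall>x y z. s (c x y) z = s y (s x z) - s x (s y z))"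
definition "AL3 \<longleftrightarrow> (\<forall>x y z. p x (c y z) = p (s y x) z - s y (p x z))"
definition "AL4 \<longleftrightarrow> (\<forall>x y z. p (s x y) z = - p (p y x) z)"
definition "AL5 \<longleftrightarrow> (\<forall>x y z. s (c x y) z = p x (c y z) - p y (c x z))"

lemma cexp: "s a (c x y) = s a (s x y) + s a (p x y)" "p a (c x y) = p a (s x y) + p a (p x y)"
  "s (c x y) a = s (s x y) a + s (p x y) a" "p (c x y) a = p (s x y) a + p (p x y) a"
  by (simp_all add: circ_op_def bil)

lemma partA:
  assumes "AL2" "AL3" "AL4"
  shows "AL1 \<longleftrightarrow> AL5"
proof -
  have *: "(p (c y x) z = s y (c x z) - s x (c y z)) \<longleftrightarrow> (s (c x y) z = p x (c y z) - p y (c x z))" for x y z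
  proof (rule iff_diff2)
    have h: "p x (c y z) = p (s y x) z - s y (p x z)" "p y (c x z) = p (s x y) z - s x (p y z)"
      "p (s x y) z = - p (p y x) z" "s (c x y) z = s y (s x z) - s x (s y z)"
      using assms by (auto simp: AL2_def AL3_def AL4_def)
    show "p (c y x) z - (s y (c x z) - s x (c y z)) = p x (c y z) - p y (c x z) - s (c x y) z"
      unfolding h by (simp add: cexp(1,4) algebra_simps)
  qed
  show ?thesis unfolding AL1_def AL5_def
    using * by metis
qed

definition "D x y z = p (c x y) z - s x (c y z) + s y (c x z)"

lemma F2: assumes "AL4" shows "D x y z + D y x z = 0"
proof -
  have h: "p (s x y) z = - p (p y x) z" "p (s y x) z = - p (p x y) z"
    using assms by (auto simp: AL4_def)
  show ?thesis unfolding D_def by (simp add: cexp(4) h algebra_simps)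
qed

lemma F1: assumes "AL2" "AL3" "AL4"
  shows "c x (c y z) - (c (c x y) z + c y (c x z)) = D y x z - D x y z"
proof -
  have h: "p x (c y z) = p (s y x) z - s y (p x z)" "p y (c x z) = p (s x y) z - s x (p y z)"
      "p (s x y) z = - p (p y x) z" "s (c x y) z = s y (s x z) - s x (s y z)"
      using assms by (auto simp: AL2_def AL3_def AL4_def)
  have e: "c x (c y z) = s x (c y z) + p x (c y z)" "c (c x y) z = s (c x y) z + p (c x y) z"
    "c y (c x z) = s y (c x z) + p y (c x z)" by (simp_all only: circ_op_def)
  show ?thesis unfolding e D_def h(1,2,4) by (simp add: cexp(1,4) h(3) algebra_simps)
qed

lemma partB: assumes "AL2" "AL3" "AL4"
  shows "leibniz_algebra c \<longleftrightarrow> AL1"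
proof
  assume L: "leibniz_algebra c"
  have "D x y z = 0" for x y z
  proof -
    have "c x (c y z) - (c (c x y) z + c y (c x z)) = 0" using L[unfolded leibniz_algebra_def, rule_format, of x y z] by simp
    then have "D y x z = D x y z" using F1[OF assms, of x y z] by simp
    moreover have "D x y z + D y x z = 0" by (rule F2[OF assms(3)])
    ultimately have "D x y z + D x y z = 0" by simp
    then show ?thesis by (rule two0)
  qed
  then show AL1 unfolding AL1_def D_def by (simp add: g0)
next
  assume A: AL1
  have D0: "D x y z = 0" for x y z using A unfolding AL1_def D_def by simp
  show "leibniz_algebra c" unfolding leibniz_algebra_def
  proof (intro allI)
    fix x y z
    have "c x (c y z) - (c (c x y) z + c y (c x z)) = 0" using F1[OF assms, of x y z] D0 by simp
    then show "c x (c y z) = c (c x y) z + c y (c x z)" by simp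
  qed
qed

lemma partC: "leibniz_rep scale c scale UNIV (\<lambda>x. - left_mult s x) (\<lambda>x. - right_mult p x) \<longleftrightarrow> AL2 \<and> AL3 \<and> AL4"
proof -
  interpret vector_space scale by (rule vs)
  have i1: "((- left_mult s (c x y)) v = (- left_mult s x) ((- left_mult s y) v) - (- left_mult s y) ((- left_mult s x) v)) \<longleftrightarrow> (s (c x y) v = s y (s x v) - s x (s y v))" for x y v
    by (rule iff_diff2) (simp add: left_mult_def bil algebra_simps)
  have i2: "((- right_mult p (c x y)) v = (- left_mult s x) ((- right_mult p y) v) - (- right_mult p y) ((- left_mult s x) v)) \<longleftrightarrow> (p v (c x y) = p (s x v) y - s x (p v y))" for x y v
    by (rule iff_diff2) (simp add: left_mult_def right_mult_def bil algebra_simps)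
  have i3: "((- right_mult p y) ((- left_mult s x) v) = - (- right_mult p y) ((- right_mult p x) v)) \<longleftrightarrow> (p (s x v) y = - p (p v x) y)" for x y v
    by (rule iff_diff1) (simp add: left_mult_def right_mult_def bil algebra_simps)
  have lin: "(\<forall>x. \<forall>v\<in>UNIV. (- left_mult s x) v \<in> UNIV \<and> (- right_mult p x) v \<in> UNIV) \<and> (\<forall>x. \<forall>v\<in>UNIV. \<forall>w\<in>UNIV. (- left_mult s x) (v + w) = (- left_mult s x) v + (- left_mult s x) w \<and> (- right_mult p x) (v + w) = (- right_mult p x) v + (- right_mult p x) w) \<and>
     (\<forall>x c. \<forall>v\<in>UNIV. (- left_mult s x) (scale c v) = scale c ((- left_mult s x) v) \<and> (- right_mult p x) (scale c v) = scale c ((- right_mult p x) v)) \<and>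
     (\<forall>x y. \<forall>v\<in>UNIV. (- left_mult s (x + y)) v = (- left_mult s x) v + (- left_mult s y) v \<and> (- right_mult p (x + y)) v = (- right_mult p x) v + (- right_mult p y) v) \<and>
     (\<forall>x c. \<forall>v\<in>UNIV. (- left_mult s (scale c x)) v = scale c ((- left_mult s x) v) \<and> (- right_mult p (scale c x)) v = scale c ((- right_mult p x) v))"
    by (simp add: left_mult_def right_mult_def bil)
  show ?thesis
  proof
    assume H: "leibniz_rep scale c scale UNIV (\<lambda>x. - left_mult s x) (\<lambda>x. - right_mult p x)"
    have H6: "\<forall>x y. \<forall>v\<in>UNIV.
        (- left_mult s (c x y)) v = (- left_mult s x) ((- left_mult s y) v) - (- left_mult s y) ((- left_mult s x) v) \<and>
        (- right_mult p (c x y)) v = (- left_mult s x) ((- right_mult p y) v) - (- right_mult p y) ((- left_mult s x) v) \<and>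
        (- right_mult p y) ((- left_mult s x) v) = - (- right_mult p y) ((- right_mult p x) v)"
      using H unfolding leibniz_rep_def by (rule conjunct2[THEN conjunct2, THEN conjunct2, THEN conjunct2, THEN conjunct2])
    have "s (c x y) v = s y (s x v) - s x (s y v)" for x y v
      using H6 i1[of x y v] by blast
    moreover have "p v (c x y) = p (s x v) y - s x (p v y)" for x y v
      using H6 i2[of x y v] by blast
    moreover have "p (s x v) y = - p (p v x) y" for x y v
      using H6 i3[of y x v] by blast
    ultimately show "AL2 \<and> AL3 \<and> AL4" unfolding AL2_def AL3_def AL4_def by blast
  next
    assume A: "AL2 \<and> AL3 \<and> AL4"
    show "leibniz_rep scale c scale UNIV (\<lambda>x. - left_mult s x) (\<lambda>x. - right_mult p x)"
    proof -
      have last: "\<forall>x y. \<forall>v\<in>UNIV.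
        (- left_mult s (c x y)) v = (- left_mult s x) ((- left_mult s y) v) - (- left_mult s y) ((- left_mult s x) v) \<and>
        (- right_mult p (c x y)) v = (- left_mult s x) ((- right_mult p y) v) - (- right_mult p y) ((- left_mult s x) v) \<and>
        (- right_mult p y) ((- left_mult s x) v) = - (- right_mult p y) ((- right_mult p x) v)"
        unfolding i1 i2 i3 using A unfolding AL2_def AL3_def AL4_def by simp
      show ?thesis unfolding leibniz_rep_def
        by (intro conjI last lin[THEN conjunct1] lin[THEN conjunct2, THEN conjunct1]
          lin[THEN conjunct2, THEN conjunct2, THEN conjunct1] lin[THEN conjunct2, THEN conjunct2, THEN conjunct2, THEN conjunct1]
          lin[THEN conjunct2, THEN conjunct2, THEN conjunct2, THEN conjunct2])
    qed
  qed
qed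


lemma uf:
  assumes "u \<in> dual_space scale"
  shows "u (a + b) = u a + u b" "u (-a) = - u a" "u (a - b) = u a - u b" "u (scale k a) = k * u a" "u 0 = 0"
  using lin_facts[of scale "(*)" u] assms by (auto simp: dual_space_def)

abbreviation "ld x \<equiv> - dual_map (left_mult s) x"
abbreviation "rd x \<equiv> dual_map (left_mult s) x + dual_map (right_mult p) x"

definition "E1 x y v = s (c x y) v - (s y (s x v) - s x (s y v))"
definition "E2 x y v = p v (c x y) - (p (s x v) y - s x (p v y))"
definition "E3 x y v = p (s x v) y + p (p v x) y"

lemma j1: assumes u: "u \<in> dual_space scale"
  shows "(ld (c x y) u = ld x (ld y u) - ld y (ld x u)) \<longleftrightarrow> (\<forall>v. u (E1 x y v) = 0)"
proof -
  have pw: "(ld (c x y) u v = (ld x (ld y u) - ld y (ld x u)) v) \<longleftrightarrow> u (E1 x y v) = 0" for v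
    by (rule iff_diff1) (simp add: E1_def uf[OF u] dual_map_def left_mult_def)
  show ?thesis unfolding fun_eq_iff pw by (rule refl)
qed

lemma j2: assumes u: "u \<in> dual_space scale"
  shows "(rd (c x y) u = ld x (rd y u) - rd y (ld x u)) \<longleftrightarrow> (\<forall>v. u (E1 x y v + E2 x y v) = 0)"
proof -
  have pw: "(rd (c x y) u v = (ld x (rd y u) - rd y (ld x u)) v) \<longleftrightarrow> u (E1 x y v + E2 x y v) = 0" for v
    by (rule iff_diff2) (simp add: E1_def E2_def uf[OF u] dual_map_def left_mult_def right_mult_def algebra_simps)
  show ?thesis unfolding fun_eq_iff pw by (rule refl)
qed

lemma j3: assumes u: "u \<in> dual_space scale"
  shows "(rd y (ld x u) = - rd y (rd x u)) \<longleftrightarrow> (\<forall>v. u (E3 y x v) = 0)"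
proof -
  have pw: "(rd y (ld x u) v = (- rd y (rd x u)) v) \<longleftrightarrow> u (E3 y x v) = 0" for v
    by (rule iff_diff1) (simp add: E3_def uf[OF u] dual_map_def left_mult_def right_mult_def bil algebra_simps)
  show ?thesis unfolding fun_eq_iff pw by (rule refl)
qed


lemma partD: "leibniz_rep scale c dual_scale (dual_space scale) (\<lambda>x. ld x) (\<lambda>x. rd x) \<longleftrightarrow> AL2 \<and> AL3 \<and> AL4"
proof -
  interpret vector_space scale by (rule vs)
  let ?V = "dual_space scale"
  have L0: "\<forall>x. \<forall>u\<in>?V. ld x u \<in> ?V \<and> rd x u \<in> ?V"
  proof (intro allI ballI conjI)
    fix x u assume u: "u \<in> ?V"
    show "ld x u \<in> ?V" unfolding dual_space_def mem_Collect_eq Vector_Spaces.linear_iff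
      by (simp add: vs vs_times fun_Compl_def dual_map_def left_mult_def uf[OF u] bil)
    show "rd x u \<in> ?V" unfolding dual_space_def mem_Collect_eq Vector_Spaces.linear_iff
      by (simp add: vs vs_times fun_Compl_def dual_map_def left_mult_def right_mult_def uf[OF u] bil algebra_simps)
  qed
  have L1: "\<forall>x. \<forall>u\<in>?V. \<forall>w\<in>?V. ld x (u + w) = ld x u + ld x w \<and> rd x (u + w) = rd x u + rd x w"
    by (simp add: fun_eq_iff dual_map_def algebra_simps)
  have L2: "\<forall>x k. \<forall>u\<in>?V. ld x (dual_scale k u) = dual_scale k (ld x u) \<and> rd x (dual_scale k u) = dual_scale k (rd x u)"
    by (simp add: fun_eq_iff dual_map_def dual_scale_def algebra_simps)
  have L3: "\<forall>x y. \<forall>u\<in>?V. ld (x + y) u = ld x u + ld y u \<and> rd (x + y) u = rd x u + rd y u"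
    by (simp add: fun_eq_iff dual_map_def left_mult_def right_mult_def uf bil algebra_simps)
  have L4: "\<forall>x k. \<forall>u\<in>?V. ld (scale k x) u = dual_scale k (ld x u) \<and> rd (scale k x) u = dual_scale k (rd x u)"
    by (simp add: fun_eq_iff dual_map_def dual_scale_def left_mult_def right_mult_def uf bil algebra_simps)
  have e1: "AL2 \<longleftrightarrow> (\<forall>x y v. E1 x y v = 0)" by (simp add: AL2_def E1_def)
  have e2: "AL3 \<longleftrightarrow> (\<forall>x y v. E2 x y v = 0)"
    unfolding AL3_def E2_def right_minus_eq by blast
  have e3: "AL4 \<longleftrightarrow> (\<forall>x y v. E3 x y v = 0)"
    unfolding AL4_def E3_def eq_neg_iff_add_eq_0 by blast
  have uz: "u 0 = 0" if "u \<in> ?V" for u using uf[OF that] by simp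
  have R: "(\<forall>x y. \<forall>u\<in>?V.
        ld (c x y) u = ld x (ld y u) - ld y (ld x u) \<and>
        rd (c x y) u = ld x (rd y u) - rd y (ld x u) \<and>
        rd y (ld x u) = - rd y (rd x u)) \<longleftrightarrow> AL2 \<and> AL3 \<and> AL4"
  proof
    assume H: "\<forall>x y. \<forall>u\<in>?V.
        ld (c x y) u = ld x (ld y u) - ld y (ld x u) \<and>
        rd (c x y) u = ld x (rd y u) - rd y (ld x u) \<and>
        rd y (ld x u) = - rd y (rd x u)"
    have a1: "E1 x y v = 0" for x y v
      by (rule sep) (use H j1 in blast)
    have a2: "E1 x y v + E2 x y v = 0" for x y v
      by (rule sep) (use H j2 in blast)
    have a3: "E3 y x v = 0" for x y v
      by (rule sep) (use H j3 in blast)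
    have "E2 x y v = 0" for x y v using a1[of x y v] a2[of x y v] by simp
    then show "AL2 \<and> AL3 \<and> AL4" using e1 e2 e3 a1 a3 by blast
  next
    assume A: "AL2 \<and> AL3 \<and> AL4"
    then have z: "E1 x y v = 0" "E2 x y v = 0" "E3 x y v = 0" for x y v using e1 e2 e3 by blast+
    show "\<forall>x y. \<forall>u\<in>?V.
        ld (c x y) u = ld x (ld y u) - ld y (ld x u) \<and>
        rd (c x y) u = ld x (rd y u) - rd y (ld x u) \<and>
        rd y (ld x u) = - rd y (rd x u)"
    proof (intro allI ballI conjI)
      fix x y u assume u: "u \<in> ?V"
      show "ld (c x y) u = ld x (ld y u) - ld y (ld x u)" unfolding j1[OF u] by (simp add: z uz[OF u])
      show "rd (c x y) u = ld x (rd y u) - rd y (ld x u)" unfolding j2[OF u] by (simp add: z uz[OF u])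
      show "rd y (ld x u) = - rd y (rd x u)" unfolding j3[OF u] by (simp add: z uz[OF u])
    qed
  qed
  show ?thesis unfolding leibniz_rep_def R
    by (simp only: eqTrueI[OF L0] eqTrueI[OF L1] eqTrueI[OF L2] eqTrueI[OF L3] eqTrueI[OF L4] simp_thms)
qed

end

theorem proposition2p6:
  fixes scale :: "'k::field_char_0 \<Rightarrow> 'a::ab_group_add \<Rightarrow> 'a"
    and B :: "'a set"
    and succ prec :: "'a \<Rightarrow> 'a \<Rightarrow> 'a"
  assumes "finite_dimensional_vector_space scale B"
    and "bilinear_op scale succ"
    and "bilinear_op scale prec"
  shows "(anti_pre_leibniz succ prec
            \<longleftrightarrow>
          ((\<forall>x y z. succ (circ_op succ prec x y) z = succ y (succ x z) - succ x (succ y z)) \<and>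
           (\<forall>x y z. prec x (circ_op succ prec y z) = prec (succ y x) z - succ y (prec x z)) \<and>
           (\<forall>x y z. prec (succ x y) z = - prec (prec y x) z) \<and>
           (\<forall>x y z. succ (circ_op succ prec x y) z
                     = prec x (circ_op succ prec y z) - prec y (circ_op succ prec x z))))
       \<and> (anti_pre_leibniz succ prec
            \<longleftrightarrow>
          (leibniz_algebra (circ_op succ prec) \<and>
           leibniz_rep scale (circ_op succ prec) scale UNIV
             (\<lambda>x. - left_mult succ x) (\<lambda>x. - right_mult prec x)))
       \<and> (anti_pre_leibniz succ prec
            \<longleftrightarrow>
          (leibniz_algebra (circ_op succ prec) \<and>
           leibniz_rep scale (circ_op succ prec) dual_scale (dual_space scale)
             (\<lambda>x. - dual_map (left_mult succ) x)
             (\<lambda>x. dual_map (left_mult succ) x + dual_map (right_mult prec) x)))"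
proof -
  have vs: "vector_space scale"
    using assms(1) unfolding finite_dimensional_vector_space_def by blast
  interpret apl scale succ prec
    using vs assms(2,3) by (simp add: apl_def)
  have apl_iff: "anti_pre_leibniz succ prec \<longleftrightarrow> AL1 \<and> AL2 \<and> AL3 \<and> AL4"
    unfolding anti_pre_leibniz_def AL1_def AL2_def AL3_def AL4_def by (rule refl)
  have pC: "leibniz_rep scale (circ_op succ prec) scale UNIV (\<lambda>x. - left_mult succ x) (\<lambda>x. - right_mult prec x) \<longleftrightarrow> AL2 \<and> AL3 \<and> AL4"
    by (rule partC)
  have pD: "leibniz_rep scale (circ_op succ prec) dual_scale (dual_space scale)
             (\<lambda>x. - dual_map (left_mult succ) x)
             (\<lambda>x. dual_map (left_mult succ) x + dual_map (right_mult prec) x) \<longleftrightarrow> AL2 \<and> AL3 \<and> AL4"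
    by (rule partD)
  show ?thesis
    unfolding apl_iff pC pD AL2_def[symmetric] AL3_def[symmetric] AL4_def[symmetric] AL5_def[symmetric]
    using partA partB by blast
qed

end
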